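(* Every connected infinite graph $G$ with uniformly bounded vertex degrees and finite asymptotic dimension is weighted hyperfinite.
   Context: A graph $G$ has asymptotic dimension at most $d$ (finite $d$) if for every $r>0$ there is $R=R(r)$ and vertex-disjoint induced subgraphs $\mathcal U_1,\dots,\mathcal U_d$ of $G$ covering $V(G)$ such that for each $i$, each connected component of $\mathcal U_i$ has diameter at most $R$ and any two distinct components of $\mathcal U_i$ are at distance at least $r$ in $G$. A connected infinite bounded-degree graph $G$ is weighted hyperfinite if for every $\epsilon>0$ there is $K_\epsilon>0$ such that for every finite induced subgraph $L\subseteq G$ and every $w:V(L)\to[0,\infty)$ there is $M\subseteq V(L)$ with $\sum_{x\in M}w(x)\le\epsilon\sum_{x\in V(L)}w(x)$ such that every connected component of $L$ with $M$ deleted has at most $K_\epsilon$ vertices. *)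

theory Defs
  imports Main "HOL-Library.Extended_Nat"
begin

definition graph :: "'a set \<Rightarrow> ('a \<Rightarrow> 'a \<Rightarrow> bool) \<Rightarrow> bool" where
  "graph V E \<longleftrightarrow> (\<forall>x y. E x y \<longrightarrow> x \<in> V \<and> y \<in> V \<and> E y x \<and> x \<noteq> y)"

definition walk_in :: "('a \<Rightarrow> 'a \<Rightarrow> bool) \<Rightarrow> 'a set \<Rightarrow> 'a list \<Rightarrow> bool" where
  "walk_in E S xs \<longleftrightarrow> xs \<noteq> [] \<and> set xs \<subseteq> S \<and>
     (\<forall>i. Suc i < length xs \<longrightarrow> E (xs ! i) (xs ! Suc i))"

definition reach_in :: "('a \<Rightarrow> 'a \<Rightarrow> bool) \<Rightarrow> 'a set \<Rightarrow> 'a \<Rightarrow> 'a \<Rightarrow> bool" where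
  "reach_in E S x y \<longleftrightarrow> (\<exists>xs. walk_in E S xs \<and> hd xs = x \<and> last xs = y)"

text \<open>Graph distance in (V,E): least number of edges of a walk, infinity if none.\<close>
definition gdist :: "'a set \<Rightarrow> ('a \<Rightarrow> 'a \<Rightarrow> bool) \<Rightarrow> 'a \<Rightarrow> 'a \<Rightarrow> enat" where
  "gdist V E x y = (INF n \<in> {n. \<exists>xs. walk_in E V xs \<and> hd xs = x \<and> last xs = y
                                       \<and> length xs = Suc n}. enat n)"

definition components :: "('a \<Rightarrow> 'a \<Rightarrow> bool) \<Rightarrow> 'a set \<Rightarrow> 'a set set" where
  "components E S = {{y. reach_in E S x y} | x. x \<in> S}"

definition connected_graph :: "'a set \<Rightarrow> ('a \<Rightarrow> 'a \<Rightarrow> bool) \<Rightarrow> bool" where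
  "connected_graph V E \<longleftrightarrow> (\<forall>x\<in>V. \<forall>y\<in>V. reach_in E V x y)"

definition bounded_degree :: "'a set \<Rightarrow> ('a \<Rightarrow> 'a \<Rightarrow> bool) \<Rightarrow> bool" where
  "bounded_degree V E \<longleftrightarrow>
     (\<exists>D::nat. \<forall>x\<in>V. finite {y. E x y} \<and> card {y. E x y} \<le> D)"

text \<open>Asymptotic dimension at most d (as in the paper: d parts U_0..U_(d-1)).
  Diameters and distances are measured in G.\<close>
definition asdim_le :: "'a set \<Rightarrow> ('a \<Rightarrow> 'a \<Rightarrow> bool) \<Rightarrow> nat \<Rightarrow> bool" where
  "asdim_le V E d \<longleftrightarrow>
     (\<forall>r::nat. r > 0 \<longrightarrow> (\<exists>R::nat. \<exists>U :: nat \<Rightarrow> 'a set.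
        (\<forall>i<d. U i \<subseteq> V) \<and> (\<Union>i<d. U i) = V \<and>
        (\<forall>i<d. \<forall>j<d. i \<noteq> j \<longrightarrow> U i \<inter> U j = {}) \<and>
        (\<forall>i<d. \<forall>C\<in>components E (U i). \<forall>x\<in>C. \<forall>y\<in>C. gdist V E x y \<le> enat R) \<and>
        (\<forall>i<d. \<forall>C1\<in>components E (U i). \<forall>C2\<in>components E (U i). C1 \<noteq> C2 \<longrightarrow>
            (\<forall>x\<in>C1. \<forall>y\<in>C2. gdist V E x y \<ge> enat r))))"

definition finite_asdim :: "'a set \<Rightarrow> ('a \<Rightarrow> 'a \<Rightarrow> bool) \<Rightarrow> bool" where
  "finite_asdim V E \<longleftrightarrow> (\<exists>d. asdim_le V E d)"

definition weighted_hyperfinite :: "'a set \<Rightarrow> ('a \<Rightarrow> 'a \<Rightarrow> bool) \<Rightarrow> bool" where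
  "weighted_hyperfinite V E \<longleftrightarrow>
     (\<forall>\<epsilon>::real. \<epsilon> > 0 \<longrightarrow> (\<exists>K::real. K > 0 \<and>
        (\<forall>L w. finite L \<and> L \<subseteq> V \<and> (\<forall>x\<in>L. w x \<ge> (0::real)) \<longrightarrow>
           (\<exists>M \<subseteq> L. (\<Sum>x\<in>M. w x) \<le> \<epsilon> * (\<Sum>x\<in>L. w x) \<and>
              (\<forall>C\<in>components E (L - M). real (card C) \<le> K)))))"

end

theory Submission
  imports Defs
begin

locale gr =
  fixes V :: "'a set" and E :: "'a \<Rightarrow> 'a \<Rightarrow> bool"
  assumes g: "graph V E" and conn: "connected_graph V E"
begin

lemma edgeV: "E x y \<Longrightarrow> x \<in> V \<and> y \<in> V \<and> E y x"
  using g unfolding graph_def by blast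

inductive pth :: "'a \<Rightarrow> 'a \<Rightarrow> nat \<Rightarrow> bool" where
  p0: "x \<in> V \<Longrightarrow> pth x x 0"
| pS: "pth x y n \<Longrightarrow> E y z \<Longrightarrow> pth x z (Suc n)"

lemma pth_V: "pth x y n \<Longrightarrow> x \<in> V \<and> y \<in> V"
  by (induction rule: pth.induct) (auto dest: edgeV)

lemma pth_trans: "pth y z k \<Longrightarrow> pth x y n \<Longrightarrow> pth x z (n + k)"
  by (induction rule: pth.induct) (auto intro: pth.intros)

lemma pth_cons: "pth y z n \<Longrightarrow> E x y \<Longrightarrow> pth x z (Suc n)"
proof (induction rule: pth.induct)
  case (p0 x') then show ?case using edgeV by (metis pth.intros)
next
  case (pS x y n z) then show ?case by (auto intro: pth.intros)
qed

lemma pth_sym: "pth x y n \<Longrightarrow> pth y x n"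
proof (induction rule: pth.induct)
  case (p0 x) then show ?case by (rule pth.p0)
next
  case (pS x y n z) then show ?case using pth_cons edgeV by blast
qed

lemma walk_snoc: "walk_in E S (xs @ [z]) \<longleftrightarrow> (xs = [] \<and> z \<in> S) \<or> (walk_in E S xs \<and> z \<in> S \<and> E (last xs) z)"
proof (cases "xs = []")
  case True then show ?thesis by (simp add: walk_in_def)
next
  case False
  have L: "length (xs @ [z]) = Suc (length xs)" by simp
  have lx: "last xs = xs ! (length xs - 1)" using False by (simp add: last_conv_nth)
  have lz: "(xs @ [z]) ! Suc (length xs - 1) = z" using False by (simp add: nth_append)
  have ly: "(xs @ [z]) ! (length xs - 1) = xs ! (length xs - 1)" using False by (simp add: nth_append_left)
  have ilt: "Suc i < length xs \<Longrightarrow> (xs @ [z]) ! i = xs ! i \<and> (xs @ [z]) ! Suc i = xs ! Suc i" for i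
    by (simp add: nth_append_left)
  show ?thesis
  proof
    assume w: "walk_in E S (xs @ [z])"
    have s: "set xs \<subseteq> S" "z \<in> S" using w unfolding walk_in_def by auto
    have a: "\<forall>i. Suc i < length xs \<longrightarrow> E (xs ! i) (xs ! Suc i)"
    proof (intro allI impI)
      fix i assume i: "Suc i < length xs"
      then have "E ((xs @ [z]) ! i) ((xs @ [z]) ! Suc i)" using w unfolding walk_in_def by simp
      then show "E (xs ! i) (xs ! Suc i)" using ilt[OF i] by simp
    qed
    have "Suc (length xs - 1) < length (xs @ [z])" using False by simp
    then have "E ((xs@[z]) ! (length xs - 1)) ((xs@[z]) ! Suc (length xs - 1))"
      using w unfolding walk_in_def by blast
    then have "E (last xs) z" using lx ly lz by simp
    then show "(xs = [] \<and> z \<in> S) \<or> (walk_in E S xs \<and> z \<in> S \<and> E (last xs) z)"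
      using a s False unfolding walk_in_def by blast
  next
    assume h: "(xs = [] \<and> z \<in> S) \<or> (walk_in E S xs \<and> z \<in> S \<and> E (last xs) z)"
    with False have w: "walk_in E S xs" "z \<in> S" "E (last xs) z" by auto
    have a: "\<forall>i. Suc i < length (xs @ [z]) \<longrightarrow> E ((xs @ [z]) ! i) ((xs @ [z]) ! Suc i)"
    proof (intro allI impI)
      fix i assume i: "Suc i < length (xs @ [z])"
      show "E ((xs @ [z]) ! i) ((xs @ [z]) ! Suc i)"
      proof (cases "Suc i < length xs")
        case True then show ?thesis using w(1) ilt[OF True] unfolding walk_in_def by simp
      next
        case f: False
        then have "i = length xs - 1" using i by simp
        then show ?thesis using w(3) lx ly lz by simp
      qed
    qed
    show "walk_in E S (xs @ [z])" using a w unfolding walk_in_def by simp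
  qed
qed

lemma walk_pth: "walk_in E V xs \<Longrightarrow> pth (hd xs) (last xs) (length xs - 1)"
proof (induction xs rule: rev_induct)
  case Nil then show ?case by (simp add: walk_in_def)
next
  case (snoc z xs)
  show ?case
  proof (cases "xs = []")
    case True
    then have "z \<in> V" using snoc.prems by (simp add: walk_in_def)
    then show ?thesis using True by (simp add: pth.p0)
  next
    case False
    then have "walk_in E V xs" "E (last xs) z" using snoc.prems walk_snoc[of V xs z] by auto
    then have "pth (hd xs) z (Suc (length xs - 1))" using snoc.IH pth.pS by blast
    then show ?thesis using False by simp
  qed
qed

lemma pth_walk: "pth x y n \<Longrightarrow> \<exists>xs. walk_in E V xs \<and> hd xs = x \<and> last xs = y \<and> length xs = Suc n"
proof (induction rule: pth.induct)
  case (p0 x) then show ?case by (intro exI[of _ "[x]"]) (auto simp: walk_in_def)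
next
  case (pS x y n z)
  then obtain xs where xs: "walk_in E V xs" "hd xs = x" "last xs = y" "length xs = Suc n" by blast
  have "z \<in> V" using pS(2) edgeV by blast
  then have "walk_in E V (xs @ [z])" using walk_snoc[of V xs z] xs pS(2) by simp
  then show ?case using xs by (intro exI[of _ "xs @ [z]"]) (auto simp: walk_in_def hd_append)
qed

lemma pth_ex: "x \<in> V \<Longrightarrow> y \<in> V \<Longrightarrow> \<exists>n. pth x y n"
proof -
  assume "x \<in> V" "y \<in> V"
  then have "reach_in E V x y" using conn unfolding connected_graph_def by blast
  then obtain xs where "walk_in E V xs" "hd xs = x" "last xs = y" unfolding reach_in_def by blast
  then show ?thesis using walk_pth by blast
qed

definition dn :: "'a \<Rightarrow> 'a \<Rightarrow> nat" where "dn x y = (LEAST n. pth x y n)"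

lemma dn_pth: "x \<in> V \<Longrightarrow> y \<in> V \<Longrightarrow> pth x y (dn x y)"
  unfolding dn_def using pth_ex by (metis LeastI)

lemma dn_le: "pth x y n \<Longrightarrow> dn x y \<le> n"
  unfolding dn_def by (rule Least_le)

lemma dn_refl: "x \<in> V \<Longrightarrow> dn x x = 0"
  using dn_le[OF pth.p0] by simp

lemma dn_tri: "x \<in> V \<Longrightarrow> y \<in> V \<Longrightarrow> z \<in> V \<Longrightarrow> dn x z \<le> dn x y + dn y z"
  using dn_le[OF pth_trans[OF dn_pth dn_pth]] by blast

lemma dn_sym: "x \<in> V \<Longrightarrow> y \<in> V \<Longrightarrow> dn x y = dn y x"
  using dn_le[OF pth_sym[OF dn_pth]] by (meson antisym)

lemma dn_edge: "u \<in> V \<Longrightarrow> E z y \<Longrightarrow> dn u y \<le> Suc (dn u z)"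
  using dn_le[OF pth.pS[OF dn_pth]] edgeV by blast

lemma gdist_dn: "x \<in> V \<Longrightarrow> y \<in> V \<Longrightarrow> gdist V E x y = enat (dn x y)"
proof -
  assume xy: "x \<in> V" "y \<in> V"
  let ?N = "{n. \<exists>xs. walk_in E V xs \<and> hd xs = x \<and> last xs = y \<and> length xs = Suc n}"
  have "dn x y \<in> ?N" using pth_walk[OF dn_pth[OF xy]] by blast
  then have a: "gdist V E x y \<le> enat (dn x y)" unfolding gdist_def by (rule INF_lower)
  have "enat (dn x y) \<le> gdist V E x y" unfolding gdist_def
  proof (rule INF_greatest)
    fix n assume "n \<in> ?N"
    then obtain xs where "walk_in E V xs" "hd xs = x" "last xs = y" "length xs = Suc n" by blast
    then have "pth x y n" using walk_pth by fastforce
    then show "enat (dn x y) \<le> enat n" using dn_le by simp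
  qed
  with a show ?thesis by simp
qed

definition ball :: "'a \<Rightarrow> nat \<Rightarrow> 'a set" where "ball x n = {y. \<exists>k\<le>n. pth x y k}"

lemma ball_Suc: "ball x (Suc n) \<subseteq> ball x n \<union> (\<Union>z\<in>ball x n. {y. E z y})"
proof
  fix y assume "y \<in> ball x (Suc n)"
  then obtain k where k: "k \<le> Suc n" "pth x y k" unfolding ball_def by blast
  show "y \<in> ball x n \<union> (\<Union>z\<in>ball x n. {y. E z y})"
  proof (cases "k \<le> n")
    case True then show ?thesis using k unfolding ball_def by blast
  next
    case False
    then have "k = Suc n" using k by simp
    then have "pth x y (Suc n)" using k by simp
    then obtain z where "pth x z n" "E z y" by (cases rule: pth.cases) auto
    then show ?thesis unfolding ball_def by blast
  qed
qed

lemma ball_card: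
  assumes x: "x \<in> V" and deg: "\<forall>v\<in>V. finite {y. E v y} \<and> card {y. E v y} \<le> D"
  shows "finite (ball x n) \<and> card (ball x n) \<le> (D+1)^n"
proof (induction n)
  case 0
  have "pth x y 0 \<Longrightarrow> y = x" for y by (cases rule: pth.cases) auto
  then have "ball x 0 = {x}" unfolding ball_def using x pth.p0 by auto
  then show ?case by simp
next
  case (Suc n)
  have bV: "ball x n \<subseteq> V" unfolding ball_def using pth_V by blast
  let ?A = "\<Union>z\<in>ball x n. {y. E z y}"
  have fA: "finite ?A" using Suc bV deg by (intro finite_UN_I) auto
  have "card ?A \<le> (\<Sum>z\<in>ball x n. card {y. E z y})" using Suc by (intro card_UN_le) simp
  also have "\<dots> \<le> (\<Sum>z\<in>ball x n. D)" using bV deg by (intro sum_mono) blast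
  also have "\<dots> = card (ball x n) * D" by simp
  finally have cA: "card ?A \<le> card (ball x n) * D" .
  have "card (ball x (Suc n)) \<le> card (ball x n \<union> ?A)"
    using ball_Suc Suc fA by (intro card_mono) auto
  also have "\<dots> \<le> card (ball x n) + card ?A" by (rule card_Un_le)
  also have "\<dots> \<le> card (ball x n) * (D + 1)" using cA by simp
  also have "\<dots> \<le> (D+1)^n * (D+1)" using Suc by (intro mult_right_mono) auto
  finally show ?case using Suc fA finite_subset[OF ball_Suc] by (simp add: mult.commute)
qed

lemma reach_in_mem: "reach_in E U a b \<Longrightarrow> a \<in> U \<and> b \<in> U"
  unfolding reach_in_def walk_in_def by (metis hd_in_set last_in_set subsetD)

lemma reach_refl: "a \<in> U \<Longrightarrow> reach_in E U a a"
  unfolding reach_in_def walk_in_def by (intro exI[of _ "[a]"]) auto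

lemma trap:
  assumes UV: "U \<subseteq> V"
    and sep: "\<forall>C1\<in>components E U. \<forall>C2\<in>components E U. C1 \<noteq> C2 \<longrightarrow> (\<forall>x\<in>C1. \<forall>y\<in>C2. gdist V E x y \<ge> enat r)"
    and t: "2*t \<le> r" and xU: "x \<in> U" and u: "reach_in E U x u" "dn u z < t" and z: "z \<in> V"
    and e: "E z y" and ny: "\<forall>u. reach_in E U x u \<longrightarrow> \<not> dn u y < t"
  shows "(\<exists>u\<in>U. dn u y = t) \<and> (\<forall>u\<in>U. t \<le> dn u y)"
proof
  have uU: "u \<in> U" "u \<in> V" using reach_in_mem[OF u(1)] UV by auto
  have yV: "y \<in> V" using e edgeV by blast
  have "dn u y \<le> Suc (dn u z)" using dn_edge[OF uU(2) e] .
  moreover have "\<not> dn u y < t" using ny u(1) by blast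
  ultimately have dut: "dn u y = t" using u(2) by linarith
  then show "\<exists>u\<in>U. dn u y = t" using uU by blast
  show "\<forall>u'\<in>U. t \<le> dn u' y"
  proof (rule ballI, rule ccontr)
    fix u' assume u': "u' \<in> U" "\<not> t \<le> dn u' y"
    have u'V: "u' \<in> V" using u' UV by blast
    have "dn u' y < t" using u'(2) by linarith
    then have nr: "\<not> reach_in E U x u'" using ny by blast
    let ?C1 = "{v. reach_in E U x v}" and ?C2 = "{v. reach_in E U u' v}"
    have c1: "?C1 \<in> components E U" unfolding components_def using xU by blast
    have c2: "?C2 \<in> components E U" unfolding components_def using u' by blast
    have "u' \<in> ?C2" using reach_refl u' by blast
    have ne: "?C1 \<noteq> ?C2"
    proof
      assume "?C1 = ?C2"
      then have "u' \<in> ?C1" using \<open>u' \<in> ?C2\<close> by (rule ssubst)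
      then show False using nr by simp
    qed
    have uc: "u \<in> ?C1" using u(1) by simp
    have allC: "\<forall>a\<in>?C1. \<forall>b\<in>?C2. enat r \<le> gdist V E a b"
      using mp[OF bspec[OF bspec[OF sep c1] c2] ne] .
    have "enat r \<le> gdist V E u u'" using bspec[OF bspec[OF allC uc] \<open>u' \<in> ?C2\<close>] .
    then have "r \<le> dn u u'" using gdist_dn[OF uU(2) u'V] by simp
    also have "\<dots> \<le> dn u y + dn y u'" using dn_tri uU(2) yV u'V by blast
    also have "\<dots> < 2*t" using dut dn_sym[OF yV u'V] u' by simp
    finally show False using t by simp
  qed
qed

lemma walk_stay:
  assumes w: "walk_in E S xs" and h: "hd xs \<in> B" and cl: "\<And>z y. z \<in> B \<Longrightarrow> E z y \<Longrightarrow> y \<in> S \<Longrightarrow> y \<in> B"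
  shows "last xs \<in> B"
proof -
  have ne: "xs \<noteq> []" using w unfolding walk_in_def by blast
  have "\<forall>k. k < length xs \<longrightarrow> xs ! k \<in> B"
  proof (rule allI, induct_tac k)
    show "0 < length xs \<longrightarrow> xs ! 0 \<in> B" using h ne by (simp add: hd_conv_nth)
  next
    fix n assume IH: "n < length xs \<longrightarrow> xs ! n \<in> B"
    show "Suc n < length xs \<longrightarrow> xs ! Suc n \<in> B"
    proof
      assume n: "Suc n < length xs"
      have "E (xs ! n) (xs ! Suc n)" using w n unfolding walk_in_def by blast
      moreover have "xs ! Suc n \<in> S" using w n unfolding walk_in_def by (meson nth_mem subsetD)
      ultimately show "xs ! Suc n \<in> B" using IH n cl by simp
    qed
  qed
  then show ?thesis using ne by (simp add: last_conv_nth)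
qed

lemma sum_UN_le':
  fixes w :: "'b \<Rightarrow> real"
  assumes "finite I" "\<forall>i\<in>I. finite (A i)" "\<forall>x. w x \<ge> 0 \<or> x \<notin> (\<Union>i\<in>I. A i)"
  shows "sum w (\<Union>i\<in>I. A i) \<le> (\<Sum>i\<in>I. sum w (A i))"
  using assms
proof (induction I rule: finite_induct)
  case empty then show ?case by simp
next
  case (insert j I)
  have f: "finite (A j)" "finite (\<Union>i\<in>I. A i)" using insert by auto
  have "sum w (A j \<inter> (\<Union>i\<in>I. A i)) \<ge> 0" using insert.prems by (intro sum_nonneg) fastforce
  then have "sum w (A j \<union> (\<Union>i\<in>I. A i)) \<le> sum w (A j) + sum w (\<Union>i\<in>I. A i)"
    using sum_Un[OF f, of w] by simp
  also have "\<dots> \<le> sum w (A j) + (\<Sum>i\<in>I. sum w (A i))" using insert by auto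
  finally show ?case using insert by simp
qed

end

theorem mainTheorem6:
  fixes V :: "'a set" and E :: "'a \<Rightarrow> 'a \<Rightarrow> bool"
  assumes "graph V E" and "connected_graph V E" and "infinite V"
    and "bounded_degree V E" and "finite_asdim V E"
  shows "weighted_hyperfinite V E"
proof -
  interpret gr V E using assms(1,2) by unfold_locales
  obtain d where asd: "asdim_le V E d" using assms(5) unfolding finite_asdim_def by blast
  obtain D0 where deg: "\<forall>v\<in>V. finite {y. E v y} \<and> card {y. E v y} \<le> D0"
    using assms(4) unfolding bounded_degree_def by blast
  show ?thesis unfolding weighted_hyperfinite_def
  proof (intro allI impI)
    fix \<epsilon> :: real assume ep: "\<epsilon> > 0"
    define m where "m = nat \<lceil>real d / \<epsilon>\<rceil> + 1"
    have m1: "m \<ge> 1" unfolding m_def by simp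
    have "real d / \<epsilon> \<le> real (nat \<lceil>real d / \<epsilon>\<rceil>)" by linarith
    then have "real d / \<epsilon> \<le> real m" unfolding m_def by simp
    then have dm: "real d \<le> \<epsilon> * real m" using ep by (simp add: divide_le_eq mult.commute)
    have "2*m > 0" using m1 by simp
    have "\<exists>R U. (\<forall>i<d. U i \<subseteq> V) \<and> (\<Union>i<d. U i) = V \<and>
        (\<forall>i<d. \<forall>j<d. i \<noteq> j \<longrightarrow> U i \<inter> U j = {}) \<and>
        (\<forall>i<d. \<forall>C\<in>components E (U i). \<forall>x\<in>C. \<forall>y\<in>C. gdist V E x y \<le> enat R) \<and>
        (\<forall>i<d. \<forall>C1\<in>components E (U i). \<forall>C2\<in>components E (U i). C1 \<noteq> C2 \<longrightarrow>
            (\<forall>x\<in>C1. \<forall>y\<in>C2. gdist V E x y \<ge> enat (2*m)))"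
      using mp[OF spec[OF asd[unfolded asdim_le_def], of "2*m"] \<open>2*m > 0\<close>] .
    then obtain R U where H: "(\<forall>i<d. U i \<subseteq> V) \<and> (\<Union>i<d. U i) = V \<and>
        (\<forall>i<d. \<forall>j<d. i \<noteq> j \<longrightarrow> U i \<inter> U j = {}) \<and>
        (\<forall>i<d. \<forall>C\<in>components E (U i). \<forall>x\<in>C. \<forall>y\<in>C. gdist V E x y \<le> enat R) \<and>
        (\<forall>i<d. \<forall>C1\<in>components E (U i). \<forall>C2\<in>components E (U i). C1 \<noteq> C2 \<longrightarrow>
            (\<forall>x\<in>C1. \<forall>y\<in>C2. gdist V E x y \<ge> enat (2*m)))" by (elim exE)
    have UV: "\<forall>i<d. U i \<subseteq> V" using H by (rule conjunct1)
    have cov: "(\<Union>i<d. U i) = V" using H by (elim conjE)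
    have diam: "\<forall>i<d. \<forall>C\<in>components E (U i). \<forall>x\<in>C. \<forall>y\<in>C. gdist V E x y \<le> enat R"
      using H by (elim conjE)
    have sep: "\<forall>i<d. \<forall>C1\<in>components E (U i). \<forall>C2\<in>components E (U i). C1 \<noteq> C2 \<longrightarrow>
            (\<forall>x\<in>C1. \<forall>y\<in>C2. gdist V E x y \<ge> enat (2*m))" using H by (elim conjE)
    define K where "K = real ((D0+1)^(R+m))"
    show "\<exists>K>0. \<forall>L w. finite L \<and> L \<subseteq> V \<and> (\<forall>x\<in>L. 0 \<le> w x) \<longrightarrow>
           (\<exists>M\<subseteq>L. sum w M \<le> \<epsilon> * sum w L \<and> (\<forall>C\<in>components E (L - M). real (card C) \<le> K))"
    proof (intro exI[of _ K] conjI allI impI)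
      show "K > 0" unfolding K_def by simp
      fix L and w :: "'a \<Rightarrow> real"
      assume Lw: "finite L \<and> L \<subseteq> V \<and> (\<forall>x\<in>L. 0 \<le> w x)"
      then have fL: "finite L" and LV: "L \<subseteq> V" and wp: "\<forall>x\<in>L. 0 \<le> w x" by auto
      define W where "W = sum w L"
      define S where "S i t = {y\<in>V. (\<exists>u\<in>U i. dn u y = t) \<and> (\<forall>u\<in>U i. t \<le> dn u y)}" for i t
      have disj: "S i t \<inter> S i t' = {}" if "t \<noteq> t'" for i t t'
      proof (rule equals0I)
        fix y assume "y \<in> S i t \<inter> S i t'"
        then obtain u u' where "u \<in> U i" "dn u y = t" "\<forall>v\<in>U i. t' \<le> dn v y"
           "u' \<in> U i" "dn u' y = t'" "\<forall>v\<in>U i. t \<le> dn v y" unfolding S_def by blast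
        then have "t' \<le> t" "t \<le> t'" by auto
        then show False using that by simp
      qed
      have ex: "\<exists>t. 1 \<le> t \<and> t \<le> m \<and> sum w (S i t \<inter> L) \<le> W / m" for i
      proof (rule ccontr)
        assume "\<not> ?thesis"
        then have big: "\<forall>t\<in>{1..m}. W / m < sum w (S i t \<inter> L)" by auto
        have "W = (\<Sum>t\<in>{1..m}. W / m)" using m1 by simp
        also have "\<dots> < (\<Sum>t\<in>{1..m}. sum w (S i t \<inter> L))"
          using big m1 by (intro sum_strict_mono) auto
        also have "\<dots> = sum w (\<Union>t\<in>{1..m}. S i t \<inter> L)"
          using fL disj by (intro sum.UNION_disjoint[symmetric]) auto
        also have "\<dots> \<le> W" unfolding W_def using fL wp by (intro sum_mono2) auto
        finally show False by simp
      qed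
      obtain T where T: "\<And>i. 1 \<le> T i \<and> T i \<le> m \<and> sum w (S i (T i) \<inter> L) \<le> W / m"
        using ex by metis
      define M where "M = (\<Union>i<d. S i (T i) \<inter> L)"
      have hML: "M \<subseteq> L" unfolding M_def by blast
      show "\<exists>M\<subseteq>L. sum w M \<le> \<epsilon> * sum w L \<and> (\<forall>C\<in>components E (L - M). real (card C) \<le> K)"
      proof (intro exI[of _ M] conjI hML ballI)
        have "sum w M \<le> (\<Sum>i<d. sum w (S i (T i) \<inter> L))"
          unfolding M_def using fL wp by (intro sum_UN_le') auto
        also have "\<dots> \<le> (\<Sum>i<d. W / m)" using T by (intro sum_mono) auto
        also have "\<dots> = real d * W / m" by simp
        also have "\<dots> \<le> \<epsilon> * W"
        proof -
          have "W \<ge> 0" unfolding W_def using wp by (intro sum_nonneg) auto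
          then have "real d * W \<le> \<epsilon> * real m * W" using dm by (intro mult_right_mono) auto
          then show ?thesis using m1 by (simp add: divide_le_eq mult.commute mult.left_commute)
        qed
        finally show "sum w M \<le> \<epsilon> * sum w L" unfolding W_def .
      next
        fix C assume C: "C \<in> components E (L - M)"
        then obtain x where x: "x \<in> L - M" and Cx: "C = {y. reach_in E (L - M) x y}"
          unfolding components_def by blast
        have xV: "x \<in> V" using x LV by blast
        then obtain i where i: "i < d" "x \<in> U i" using cov by blast
        have UVi: "U i \<subseteq> V" using UV i(1) by blast
        have sepi: "\<forall>C1\<in>components E (U i). \<forall>C2\<in>components E (U i). C1 \<noteq> C2 \<longrightarrow>
            (\<forall>x\<in>C1. \<forall>y\<in>C2. gdist V E x y \<ge> enat (2*m))" using sep i(1) by blast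
        have diami: "\<forall>C\<in>components E (U i). \<forall>x\<in>C. \<forall>y\<in>C. gdist V E x y \<le> enat R"
          using diam i(1) by blast
        define t where "t = T i"
        have t1: "1 \<le> t" "t \<le> m" using T unfolding t_def by auto
        define B where "B = {y\<in>V. \<exists>u. reach_in E (U i) x u \<and> dn u y < t}"
        have xB: "x \<in> B" unfolding B_def using xV reach_refl[OF i(2)] dn_refl[OF xV] t1 by auto
        have cl: "y \<in> B" if zB: "z \<in> B" and e: "E z y" and yL: "y \<in> L - M" for z y
        proof (rule ccontr)
          assume ny: "y \<notin> B"
          obtain u where u: "reach_in E (U i) x u" "dn u z < t" and zV: "z \<in> V"
            using zB unfolding B_def by blast
          have yV: "y \<in> V" using e edgeV by blast
          have ny': "\<forall>u. reach_in E (U i) x u \<longrightarrow> \<not> dn u y < t" using ny yV unfolding B_def by blast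
          have "(\<exists>u\<in>U i. dn u y = t) \<and> (\<forall>u\<in>U i. t \<le> dn u y)"
            using trap[OF UVi sepi _ i(2) u(1) u(2) zV e ny'] t1 by simp
          then have "y \<in> S i (T i)" unfolding S_def t_def using yV by simp
          then have "y \<in> M" using yL i unfolding M_def by blast
          then show False using yL by blast
        qed
        let ?D = "{v. reach_in E (U i) x v}"
        have Dc: "?D \<in> components E (U i)" unfolding components_def using i by blast
        have "C \<subseteq> ball x (R + m)"
        proof
          fix y assume "y \<in> C"
          then obtain xs where xs: "walk_in E (L - M) xs" "hd xs = x" "last xs = y"
            using Cx unfolding reach_in_def by blast
          have hB: "hd xs \<in> B" using xs(2) xB by simp
          have "last xs \<in> B" using walk_stay[OF xs(1) hB cl] .
          then have "y \<in> B" using xs(3) by simp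
          then obtain u where u: "reach_in E (U i) x u" "dn u y < t" and yV: "y \<in> V"
            unfolding B_def by blast
          have uV: "u \<in> V" using reach_in_mem[OF u(1)] UV i by blast
          have xD: "x \<in> ?D" using reach_refl[OF i(2)] by simp
          have uD: "u \<in> ?D" using u(1) by simp
          have "gdist V E x u \<le> enat R" using bspec[OF bspec[OF bspec[OF diami Dc] xD] uD] .
          then have "dn x u \<le> R" using gdist_dn[OF xV uV] by simp
          moreover have "dn x y \<le> dn x u + dn u y" using dn_tri xV uV yV by blast
          ultimately have "dn x y \<le> R + m" using u(2) t1 by linarith
          then show "y \<in> ball x (R + m)" unfolding ball_def using dn_pth[OF xV yV] by blast
        qed
        moreover have "finite (ball x (R+m)) \<and> card (ball x (R+m)) \<le> (D0+1)^(R+m)"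
          using ball_card[OF xV deg] .
        ultimately have "card C \<le> (D0+1)^(R+m)" using card_mono[of "ball x (R+m)" C] by linarith
        then show "real (card C) \<le> K" unfolding K_def by (simp only: of_nat_le_iff)
      qed
    qed
  qed
qed

end
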